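(* Let $\alpha\in(0,1)$ and let $j\ge2$ be an integer, with coefficients $c_s^{(\alpha)}$, $0\le s\le j$, as defined in the context. Then $$\frac{11}{16}\cdot\frac{1-\alpha}{(j+1)^\alpha}<c_j^{(\alpha)}<\frac{1-\alpha}{j^\alpha},$$ $$c_0^{(\alpha)}>c_2^{(\alpha)}>c_3^{(\alpha)}>\dots>c_{j-1}^{(\alpha)}>c_j^{(\alpha)}\quad(\text{i.e. } c_0^{(\alpha)}>c_2^{(\alpha)} \text{ and } c_s^{(\alpha)}>c_{s+1}^{(\alpha)} \text{ for } 2\le s\le j-1),$$ $$c_0^{(\alpha)}+3c_1^{(\alpha)}-4c_2^{(\alpha)}>0.$$
   Context: For $l\ge 0$: $a_l^{(\alpha)}=(l+1)^{1-\alpha}-l^{1-\alpha}$ and $b_l^{(\alpha)}=\frac{1}{2-\alpha}\left[(l+1)^{2-\alpha}-l^{2-\alpha}\right]-\frac12\left[(l+1)^{1-\alpha}+l^{1-\alpha}\right]$. The coefficients $c_s^{(\alpha)}$ depend on $j$: for $j=2$: $c_0^{(\alpha)}=a_0^{(\alpha)}+b_0^{(\alpha)}$, $c_1^{(\alpha)}=a_1^{(\alpha)}+b_1^{(\alpha)}+b_2^{(\alpha)}-b_0^{(\alpha)}$, $c_2^{(\alpha)}=a_2^{(\alpha)}-b_2^{(\alpha)}-b_1^{(\alpha)}$; for $j\ge3$: $c_0^{(\alpha)}=a_0^{(\alpha)}+b_0^{(\alpha)}$, $c_s^{(\alpha)}=a_s^{(\alpha)}+b_s^{(\alpha)}-b_{s-1}^{(\alpha)}$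 for $1\le s\le j-2$, $c_{j-1}^{(\alpha)}=a_{j-1}^{(\alpha)}+b_{j-1}^{(\alpha)}+b_j^{(\alpha)}-b_{j-2}^{(\alpha)}$, $c_j^{(\alpha)}=a_j^{(\alpha)}-b_j^{(\alpha)}-b_{j-1}^{(\alpha)}$. *)

theory Defs
  imports Complex_Main
begin

definition acoef :: "real \<Rightarrow> nat \<Rightarrow> real" where
  "acoef \<alpha> l = (real l + 1) powr (1 - \<alpha>) - (real l) powr (1 - \<alpha>)"

definition bcoef :: "real \<Rightarrow> nat \<Rightarrow> real" where
  "bcoef \<alpha> l = 1 / (2 - \<alpha>) * ((real l + 1) powr (2 - \<alpha>) - (real l) powr (2 - \<alpha>))
                 - 1 / 2 * ((real l + 1) powr (1 - \<alpha>) + (real l) powr (1 - \<alpha>))"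

definition ccoef :: "real \<Rightarrow> nat \<Rightarrow> nat \<Rightarrow> real" where
  "ccoef \<alpha> j s =
    (if j = 2 then
       (if s = 0 then acoef \<alpha> 0 + bcoef \<alpha> 0
        else if s = 1 then acoef \<alpha> 1 + bcoef \<alpha> 1 + bcoef \<alpha> 2 - bcoef \<alpha> 0
        else acoef \<alpha> 2 - bcoef \<alpha> 2 - bcoef \<alpha> 1)
     else
       (if s = 0 then acoef \<alpha> 0 + bcoef \<alpha> 0
        else if s \<le> j - 2 then acoef \<alpha> s + bcoef \<alpha> s - bcoef \<alpha> (s - 1)
        else if s = j - 1 then acoef \<alpha> (j-1) + bcoef \<alpha> (j-1) + bcoef \<alpha> j - bcoef \<alpha> (j-2)
        else acoef \<alpha> j - bcoef \<alpha> j - bcoef \<alpha> (j-1)))"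

end

theory Submission
  imports Defs
begin


lemma deriv_cmp:
  fixes \<phi> \<psi> \<phi>' \<psi>' :: "real \<Rightarrow> real"
  assumes "a \<le> b"
    and "\<And>x. a \<le> x \<Longrightarrow> x \<le> b \<Longrightarrow> (\<phi> has_real_derivative \<phi>' x) (at x)"
    and "\<And>x. a \<le> x \<Longrightarrow> x \<le> b \<Longrightarrow> (\<psi> has_real_derivative \<psi>' x) (at x)"
    and "\<And>x. a \<le> x \<Longrightarrow> x \<le> b \<Longrightarrow> \<phi>' x \<le> \<psi>' x"
  shows "\<psi> a - \<phi> a \<le> \<psi> b - \<phi> b"
proof -
  have "(\<lambda>x. \<psi> x - \<phi> x) a \<le> (\<lambda>x. \<psi> x - \<phi> x) b"
  proof (rule DERIV_nonneg_imp_nondecreasing[OF assms(1)])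
    fix x assume "a \<le> x" "x \<le> b"
    then show "\<exists>y. ((\<lambda>x. \<psi> x - \<phi> x) has_real_derivative y) (at x) \<and> 0 \<le> y"
      using assms(2-4) by (intro exI[of _ "\<psi>' x - \<phi>' x"]) (auto intro: derivative_intros)
  qed
  then show ?thesis by simp
qed

lemma trap:
  fixes G g gp gpp :: "real \<Rightarrow> real"
  assumes dG: "\<And>y. l \<le> y \<Longrightarrow> y \<le> l+1 \<Longrightarrow> (G has_real_derivative g y) (at y)"
    and dg: "\<And>y. l \<le> y \<Longrightarrow> y \<le> l+1 \<Longrightarrow> (g has_real_derivative gp y) (at y)"
    and dg1: "\<And>y. l \<le> y \<Longrightarrow> y \<le> l+1 \<Longrightarrow> (gp has_real_derivative gpp y) (at y)"
    and bm: "\<And>y. l \<le> y \<Longrightarrow> y \<le> l+1 \<Longrightarrow> m \<le> - gpp y"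
    and bM: "\<And>y. l \<le> y \<Longrightarrow> y \<le> l+1 \<Longrightarrow> - gpp y \<le> M"
  shows "m/12 \<le> G (l+1) - G l - (g l + g (l+1))/2 \<and> G (l+1) - G l - (g l + g (l+1))/2 \<le> M/12"
proof -
  define k where "k y = (y-l) * gp y / 2 - (g y - g l)/2" for y
  define u where "u y = G y - G l - (y-l)*(g l + g y)/2" for y
  have dk: "(k has_real_derivative (y-l) * gpp y / 2) (at y)" if "l \<le> y" "y \<le> l+1" for y
  proof -
    have "(k has_real_derivative ((1 * gp y + (y-l) * gpp y)/2 - gp y / 2)) (at y)"
      unfolding k_def using dg[OF that] dg1[OF that]
      by (auto intro!: derivative_eq_intros)
    then show ?thesis by (rule DERIV_cong) (simp add: field_simps)
  qed
  have du: "(u has_real_derivative - k y) (at y)" if "l \<le> y" "y \<le> l+1" for y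
  proof -
    have "(u has_real_derivative (g y - (1 * (g l + g y) + (y-l) * gp y)/2)) (at y)"
      unfolding u_def using dG[OF that] dg[OF that]
      by (auto intro!: derivative_eq_intros)
    then show ?thesis by (rule DERIV_cong) (simp add: k_def field_simps)
  qed
  have k1: "k y \<le> - m * (y-l)^2/4" if "l \<le> y" "y \<le> l+1" for y
  proof -
    have "(\<lambda>y. - m * (y-l)^2/4) l - k l \<le> (\<lambda>y. - m * (y-l)^2/4) y - k y"
    proof (rule deriv_cmp[OF that(1)])
      fix x assume "l \<le> x" "x \<le> y"
      then show "(k has_real_derivative (x-l) * gpp x / 2) (at x)" using dk that by auto
      show "((\<lambda>y. - m * (y-l)^2/4) has_real_derivative - m * (x - l) / 2) (at x)"
        by (auto intro!: derivative_eq_intros)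
      have "m \<le> - gpp x" using bm \<open>l \<le> x\<close> \<open>x \<le> y\<close> that by auto
      from mult_left_mono[OF this, of "x-l"] \<open>l \<le> x\<close>
      have "(x-l) * gpp x \<le> - m * (x - l)" by (simp add: algebra_simps)
      then show "(x-l) * gpp x / 2 \<le> - m * (x - l) / 2" by linarith
    qed
    then show ?thesis by (simp add: k_def)
  qed
  have k2: "- M * (y-l)^2/4 \<le> k y" if "l \<le> y" "y \<le> l+1" for y
  proof -
    have "k l - (\<lambda>y. - M * (y-l)^2/4) l \<le> k y - (\<lambda>y. - M * (y-l)^2/4) y"
    proof (rule deriv_cmp[OF that(1)])
      fix x assume "l \<le> x" "x \<le> y"
      then show "(k has_real_derivative (x-l) * gpp x / 2) (at x)" using dk that by auto
      show "((\<lambda>y. - M * (y-l)^2/4) has_real_derivative - M * (x - l) / 2) (at x)"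
        by (auto intro!: derivative_eq_intros)
      have "- gpp x \<le> M" using bM \<open>l \<le> x\<close> \<open>x \<le> y\<close> that by auto
      from mult_left_mono[OF this, of "x-l"] \<open>l \<le> x\<close>
      have "- M * (x - l) \<le> (x-l) * gpp x" by (simp add: algebra_simps)
      then show "- M * (x - l) / 2 \<le> (x-l) * gpp x / 2" by linarith
    qed
    then show ?thesis by (simp add: k_def)
  qed
  have "u l - (\<lambda>y. m * (y-l)^3/12) l \<le> u (l+1) - (\<lambda>y. m * (y-l)^3/12) (l+1)"
  proof (rule deriv_cmp[of l "l+1" "\<lambda>y. m * (y-l)^3/12" "\<lambda>x. m * (x-l)^2/4" u "\<lambda>y. - k y"])
    fix x assume x: "l \<le> x" "x \<le> l+1"
    show "(u has_real_derivative - k x) (at x)" using du[OF x] .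
    have "((\<lambda>y. (y-l)^3) has_real_derivative 3*(x-l)^2) (at x)"
      by (auto intro!: derivative_eq_intros)
    from DERIV_cmult[OF this, of "m/12"]
    show "((\<lambda>y. m * (y-l)^3/12) has_real_derivative m * (x-l)^2/4) (at x)"
      by (simp add: field_simps)
    show "m * (x-l)^2/4 \<le> - k x" using k1[OF x] by simp
  qed simp
  moreover
  have "(\<lambda>y. M * (y-l)^3/12) l - u l \<le> (\<lambda>y. M * (y-l)^3/12) (l+1) - u (l+1)"
  proof (rule deriv_cmp[of l "l+1" u "\<lambda>y. - k y" _ "\<lambda>x. M * (x-l)^2/4"])
    fix x assume x: "l \<le> x" "x \<le> l+1"
    show "(u has_real_derivative - k x) (at x)" using du[OF x] .
    have "((\<lambda>y. (y-l)^3) has_real_derivative 3*(x-l)^2) (at x)"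
      by (auto intro!: derivative_eq_intros)
    from DERIV_cmult[OF this, of "M/12"]
    show "((\<lambda>y. M * (y-l)^3/12) has_real_derivative M * (x-l)^2/4) (at x)"
      by (simp add: field_simps)
    show "- k x \<le> M * (x-l)^2/4" using k2[OF x] by simp
  qed simp
  ultimately show ?thesis by (simp add: u_def)
qed

lemma shiftp: "(G has_real_derivative D) (at (x+t)) \<Longrightarrow> ((\<lambda>t. G (x+t)) has_real_derivative D) (at t)"
proof -
  assume a: "(G has_real_derivative D) (at (x+t))"
  have "((\<lambda>t. x+t) has_real_derivative 0 + 1) (at t)" by (intro DERIV_add DERIV_const DERIV_ident)
  from DERIV_chain2[OF a this] show ?thesis by simp
qed

lemma shiftm: "(G has_real_derivative D) (at (x-t)) \<Longrightarrow> ((\<lambda>t. G (x-t)) has_real_derivative -D) (at t)"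
proof -
  assume a: "(G has_real_derivative D) (at (x-t))"
  have "((\<lambda>t. x-t) has_real_derivative 0 - 1) (at t)" by (intro DERIV_diff DERIV_const DERIV_ident)
  from DERIV_chain2[OF a this] show ?thesis by simp
qed

lemma shiftp': "(G has_real_derivative D) (at (t+c)) \<Longrightarrow> ((\<lambda>t. G (t+c)) has_real_derivative D) (at t)"
proof -
  assume a: "(G has_real_derivative D) (at (t+c))"
  have "((\<lambda>t. t+c) has_real_derivative 1 + 0) (at t)" by (intro DERIV_add DERIV_const DERIV_ident)
  from DERIV_chain2[OF a this] show ?thesis by simp
qed

lemma shiftm': "(G has_real_derivative D) (at (t-c)) \<Longrightarrow> ((\<lambda>t. G (t-c)) has_real_derivative D) (at t)"
proof -
  assume a: "(G has_real_derivative D) (at (t-c))"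
  have "((\<lambda>t. t-c) has_real_derivative 1 - 0) (at t)" by (intro DERIV_diff DERIV_const DERIV_ident)
  from DERIV_chain2[OF a this] show ?thesis by simp
qed

lemma sdiff:
  fixes G Gp Gpp :: "real \<Rightarrow> real"
  assumes d: "0 \<le> d"
    and dG: "\<And>y. x-d \<le> y \<Longrightarrow> y \<le> x+d \<Longrightarrow> (G has_real_derivative Gp y) (at y)"
    and dG1: "\<And>y. x-d \<le> y \<Longrightarrow> y \<le> x+d \<Longrightarrow> (Gp has_real_derivative Gpp y) (at y)"
    and b: "\<And>y. x-d \<le> y \<Longrightarrow> y \<le> x+d \<Longrightarrow> Gpp y \<le> -m"
  shows "G (x+d) - 2 * G x + G (x-d) \<le> -m * d^2"
proof -
  define p1 where "p1 t = Gp (x+t) - Gp (x-t) + 2*m*t" for t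
  define p0 where "p0 t = G (x+t) + G (x-t) - 2 * G x + m*t^2" for t
  have dp1: "(p1 has_real_derivative Gpp (x+t) + Gpp (x-t) + 2*m) (at t)" if "0 \<le> t" "t \<le> d" for t
  proof -
    have a: "((\<lambda>t. Gp (x+t)) has_real_derivative Gpp (x+t)) (at t)"
      by (rule shiftp, rule dG1) (use that in auto)
    have b: "((\<lambda>t. Gp (x-t)) has_real_derivative - Gpp (x-t)) (at t)"
      by (rule shiftm, rule dG1) (use that in auto)
    have c: "((\<lambda>t. 2*m*t) has_real_derivative 2*m*1) (at t)" by (intro DERIV_cmult DERIV_ident)
    have "(p1 has_real_derivative Gpp (x+t) - (- Gpp (x-t)) + 2*m*1) (at t)"
      unfolding p1_def by (intro DERIV_add DERIV_diff a b c)
    then show ?thesis by simp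
  qed
  have dp0: "(p0 has_real_derivative p1 t) (at t)" if "0 \<le> t" "t \<le> d" for t
  proof -
    have a: "((\<lambda>t. G (x+t)) has_real_derivative Gp (x+t)) (at t)"
      by (rule shiftp, rule dG) (use that in auto)
    have b: "((\<lambda>t. G (x-t)) has_real_derivative - Gp (x-t)) (at t)"
      by (rule shiftm, rule dG) (use that in auto)
    have c: "((\<lambda>t. t^2) has_real_derivative 2*t) (at t)"
      by (auto intro!: derivative_eq_intros)
    have "(p0 has_real_derivative Gp (x+t) + (- Gp (x-t)) - 0 + m*(2*t)) (at t)"
      unfolding p0_def by (intro DERIV_add DERIV_diff DERIV_cmult DERIV_const a b c)
    then show ?thesis by (simp add: p1_def mult.assoc mult.left_commute)
  qed
  have p1n: "p1 t \<le> 0" if "0 \<le> t" "t \<le> d" for t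
  proof -
    have "(\<lambda>_. 0) 0 - p1 0 \<le> (\<lambda>_. 0) t - p1 t"
    proof (rule deriv_cmp[OF that(1), of p1 "\<lambda>t. Gpp (x+t) + Gpp (x-t) + 2*m" _ "\<lambda>_. 0"])
      fix y assume y: "0 \<le> y" "y \<le> t"
      show "(p1 has_real_derivative Gpp (x+y) + Gpp (x-y) + 2*m) (at y)" using dp1 y that by auto
      show "((\<lambda>_. 0) has_real_derivative 0) (at y)" by simp
      have "Gpp (x+y) \<le> -m" "Gpp (x-y) \<le> -m" using b y that by auto
      then show "Gpp (x+y) + Gpp (x-y) + 2*m \<le> 0" by simp
    qed
    then show ?thesis by (simp add: p1_def)
  qed
  have "(\<lambda>_. 0) 0 - p0 0 \<le> (\<lambda>_. 0) d - p0 d"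
  proof (rule deriv_cmp[OF d, of p0 p1 _ "\<lambda>_. 0"])
    fix y assume y: "0 \<le> y" "y \<le> d"
    show "(p0 has_real_derivative p1 y) (at y)" using dp0 y by auto
    show "((\<lambda>_. 0) has_real_derivative 0) (at y)" by simp
    show "p1 y \<le> 0" using p1n y by auto
  qed
  then show ?thesis by (simp add: p0_def)
qed



definition ff :: "real \<Rightarrow> real \<Rightarrow> real" where "ff a y = y powr (1-a)"
definition FF :: "real \<Rightarrow> real \<Rightarrow> real" where "FF a y = y powr (2-a) / (2-a)"
definition g1 :: "real \<Rightarrow> real \<Rightarrow> real" where "g1 a y = (1-a) * y powr (-a)"
definition g2 :: "real \<Rightarrow> real \<Rightarrow> real" where "g2 a y = -((1-a)*a) * y powr (-a-1)"
definition g3 :: "real \<Rightarrow> real \<Rightarrow> real" where "g3 a y = (1-a)*a*(a+1) * y powr (-a-2)"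

lemma dFF: assumes "0 < y" "a < 1" shows "(FF a has_real_derivative ff a y) (at y)"
proof -
  have "((\<lambda>y. y powr (2-a)) has_real_derivative (2-a) * y powr (2-a-1)) (at y)"
    by (rule has_real_derivative_powr) (use assms in auto)
  from DERIV_cdivide[OF this, of "2-a"] assms show ?thesis
    unfolding FF_def ff_def by (simp add: diff_diff_eq[symmetric])
qed

lemma dff: assumes "0 < y" shows "(ff a has_real_derivative g1 a y) (at y)"
proof -
  have "((\<lambda>y. y powr (1-a)) has_real_derivative (1-a) * y powr (1-a-1)) (at y)"
    by (rule has_real_derivative_powr) (use assms in auto)
  then show ?thesis unfolding ff_def g1_def by simp
qed

lemma dg1: assumes "0 < y" shows "(g1 a has_real_derivative g2 a y) (at y)"
proof -
  have "((\<lambda>y. y powr (-a)) has_real_derivative (-a) * y powr (-a-1)) (at y)"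
    by (rule has_real_derivative_powr) (use assms in auto)
  from DERIV_cmult[OF this, of "1-a"] show ?thesis unfolding g1_def g2_def
    by (simp add: algebra_simps)
qed

lemma dg2: assumes "0 < y" shows "(g2 a has_real_derivative g3 a y) (at y)"
proof -
  have "((\<lambda>y. y powr (-a-1)) has_real_derivative (-a-1) * y powr (-a-1-1)) (at y)"
    by (rule has_real_derivative_powr) (use assms in auto)
  from DERIV_cmult[OF this, of "-((1-a)*a)"] show ?thesis unfolding g2_def g3_def
    by (simp add: algebra_simps)
qed

definition bR :: "real \<Rightarrow> real \<Rightarrow> real" where
  "bR a x = FF a (x+1) - FF a x - (ff a x + ff a (x+1))/2"

lemma aux_alg: "1/(c::real)*(X-Y) - 1/2*(C+D) = X/c - Y/c - (D+C)/2"
  by (simp add: diff_divide_distrib)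

lemma bcoef_eq: "bcoef a l = bR a (real l)"
  unfolding bcoef_def bR_def FF_def ff_def aux_alg by simp

lemma acoef_eq: "acoef a l = ff a (real l + 1) - ff a (real l)"
  unfolding acoef_def ff_def by simp

lemma b_bounds:
  assumes "0 < l" "0 < a" "a < 1"
  shows "(1-a)*a*(l+1) powr (-a-1)/12 \<le> bR a l \<and> bR a l \<le> (1-a)*a*l powr (-a-1)/12"
  unfolding bR_def
proof (rule trap[where gp = "g1 a" and gpp = "g2 a"])
  fix y assume y: "l \<le> y" "y \<le> l+1"
  then have y0: "0 < y" using assms by auto
  show "(FF a has_real_derivative ff a y) (at y)" using dFF[OF y0] assms by auto
  show "(ff a has_real_derivative g1 a y) (at y)" using dff[OF y0] .
  show "(g1 a has_real_derivative g2 a y) (at y)" using dg1[OF y0] .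
  have P: "0 \<le> (1-a)*a" using assms by auto
  have "(l+1) powr (-a-1) \<le> y powr (-a-1)" by (rule powr_mono2') (use assms y in auto)
  from mult_left_mono[OF this P]
  show "(1-a)*a*(l+1) powr (-a-1) \<le> - g2 a y" unfolding g2_def by simp
  have "y powr (-a-1) \<le> l powr (-a-1)" by (rule powr_mono2') (use assms y in auto)
  from mult_left_mono[OF this P]
  show "- g2 a y \<le> (1-a)*a*l powr (-a-1)" unfolding g2_def by simp
qed

lemma b_upper2:
  assumes "1 \<le> l" "0 < a" "a < 1"
  shows "bR a l \<le> (1-a)*a/(12*l)"
proof -
  have "l powr (-a-1) \<le> l powr (-1)" by (rule powr_mono) (use assms in auto)
  also have "\<dots> = 1/l" using assms by (simp add: powr_minus divide_inverse)
  finally have "(1-a)*a*l powr (-a-1) \<le> (1-a)*a*(1/l)"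
    by (rule mult_left_mono) (use assms in auto)
  with b_bounds[of l a] assms show ?thesis by auto
qed

lemma b_nonneg: assumes "0 < l" "0 < a" "a < 1" shows "0 \<le> bR a l"
proof -
  have "0 \<le> (1-a)*a*(l+1) powr (-a-1)/12" using assms by auto
  with b_bounds[OF assms] show ?thesis by linarith
qed

lemma a_bounds:
  assumes "0 < l" "0 < a" "a < 1"
  shows "g1 a (l+1) < ff a (l+1) - ff a l \<and> ff a (l+1) - ff a l < g1 a l"
proof -
  obtain z where z: "l < z" "z < l+1" "ff a (l+1) - ff a l = (l+1-l) * g1 a z"
    using MVT2[of l "l+1" "ff a" "g1 a"] dff assms by force
  have "(l+1) powr (-a) < z powr (-a)" by (rule powr_less_mono2_neg) (use assms z in auto)
  moreover have "z powr (-a) < l powr (-a)" by (rule powr_less_mono2_neg) (use assms z in auto)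
  ultimately show ?thesis using z(3) assms unfolding g1_def by simp
qed

lemma sdiff_ff:
  assumes "1 < x" "0 < a" "a < 1"
  shows "ff a (x+1) - 2 * ff a x + ff a (x-1) \<le> - ((1-a)*a*(x+1) powr (-a-1))"
proof -
  have "ff a (x+1) - 2 * ff a x + ff a (x-1) \<le> - ((1-a)*a*(x+1) powr (-a-1)) * 1^2"
  proof (rule sdiff[where Gp = "g1 a" and Gpp = "g2 a"])
    fix y assume y: "x-1 \<le> y" "y \<le> x+1"
    then have y0: "0 < y" using assms by auto
    show "(ff a has_real_derivative g1 a y) (at y)" using dff[OF y0] .
    show "(g1 a has_real_derivative g2 a y) (at y)" using dg1[OF y0] .
    have P: "0 \<le> (1-a)*a" using assms by auto
    have "(x+1) powr (-a-1) \<le> y powr (-a-1)" by (rule powr_mono2') (use assms y in auto)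
    from mult_left_mono[OF this P]
    show "g2 a y \<le> - ((1-a)*a*(x+1) powr (-a-1))" unfolding g2_def by simp
  qed simp
  then show ?thesis by simp
qed



definition HH :: "real \<Rightarrow> real \<Rightarrow> real" where "HH a y = ff a y + g1 a y / 2"
definition H1 :: "real \<Rightarrow> real \<Rightarrow> real" where "H1 a y = g1 a y + g2 a y / 2"
definition H2 :: "real \<Rightarrow> real \<Rightarrow> real" where "H2 a y = g2 a y + g3 a y / 2"

lemma dHH: "0 < y \<Longrightarrow> (HH a has_real_derivative H1 a y) (at y)"
  unfolding HH_def[abs_def] H1_def by (intro DERIV_add DERIV_cdivide dff dg1)

lemma dH1: "0 < y \<Longrightarrow> (H1 a has_real_derivative H2 a y) (at y)"
  unfolding H1_def[abs_def] H2_def by (intro DERIV_add DERIV_cdivide dg1 dg2)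

lemma H2_bound:
  assumes "0 < a" "a < 1" "1 \<le> lo" "lo \<le> y" "y \<le> hi"
  shows "H2 a y \<le> - ((1-a)*a*(hi powr (-a-2)*(lo-1)))"
proof -
  have y0: "0 < y" using assms by auto
  have h: "(-a-1) = 1 + (-a-2)" by simp
  have e: "y powr (-a-1) = y * y powr (-a-2)"
    by (subst h, subst powr_add) (use y0 in simp)
  have H: "H2 a y = - ((1-a)*a*(y powr (-a-2) * (y - (a+1)/2)))"
    unfolding H2_def g2_def g3_def e by (simp add: algebra_simps)
  have "hi powr (-a-2) * (lo-1) \<le> y powr (-a-2) * (y - (a+1)/2)"
  proof (rule mult_mono)
    show "hi powr (-a-2) \<le> y powr (-a-2)" by (rule powr_mono2') (use assms y0 in auto)
    show "lo - 1 \<le> y - (a+1)/2" using assms by (auto simp: field_simps)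
  qed (use assms in auto)
  from mult_left_mono[OF this, of "(1-a)*a"] assms H show ?thesis by simp
qed

definition CC :: "real \<Rightarrow> real \<Rightarrow> real" where
  "CC a x = FF a (x+1) - 2*FF a x + FF a (x-1) + (ff a (x+1) - 2*ff a x + ff a (x-1))/2"

lemma dCC:
  assumes "1 < x" "a < 1"
  shows "(CC a has_real_derivative HH a (x+1) - 2*HH a x + HH a (x-1)) (at x)"
proof -
  have p: "0 < x+1" "0 < x" "0 < x-1" using assms by auto
  have a1: "((\<lambda>x. FF a (x+1)) has_real_derivative ff a (x+1)) (at x)"
    by (rule shiftp', rule dFF) (use assms p in auto)
  have a2: "((\<lambda>x. FF a (x-1)) has_real_derivative ff a (x-1)) (at x)"
    by (rule shiftm', rule dFF) (use assms p in auto)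
  have a3: "((\<lambda>x. ff a (x+1)) has_real_derivative g1 a (x+1)) (at x)"
    by (rule shiftp', rule dff) (use assms p in auto)
  have a4: "((\<lambda>x. ff a (x-1)) has_real_derivative g1 a (x-1)) (at x)"
    by (rule shiftm', rule dff) (use assms p in auto)
  have a5: "(FF a has_real_derivative ff a x) (at x)" by (rule dFF) (use assms p in auto)
  have a6: "(ff a has_real_derivative g1 a x) (at x)" by (rule dff) (use assms p in auto)
  have "(CC a has_real_derivative ff a (x+1) - 2 * ff a x + ff a (x-1) + (g1 a (x+1) - 2 * g1 a x + g1 a (x-1))/2) (at x)"
    unfolding CC_def[abs_def] by (intro DERIV_add DERIV_diff DERIV_cmult DERIV_cdivide a1 a2 a3 a4 a5 a6)
  then show ?thesis by (rule DERIV_cong) (simp add: HH_def field_simps)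
qed

lemma Cdec:
  assumes s: "2 \<le> s" and a: "0 < a" "a < 1"
  shows "CC a s - CC a (s+1) > (1-a)*a*(s+2) powr (-a-1)/12"
proof -
  define P where "P = (1-a)*a"
  define R where "R = (s+2) powr (-a-2)"
  define K where "K = P*(R*(s-1))/4 + P*(R*(s-3/2))/2"
  have P0: "0 < P" using a by (simp add: P_def)
  have R0: "0 < R" using s by (simp add: R_def)
  define D where "D y = HH a (y+1/2) - 2 * HH a y + HH a (y-1/2)" for y
  have dbound: "D y \<le> - (P*(R*(lo-1))) * (1/2)^2"
    if "1 \<le> lo" "lo \<le> y - 1/2" "y + 1/2 \<le> s+2" for y lo
    unfolding D_def
  proof (rule sdiff[where Gp = "H1 a" and Gpp = "H2 a"])
    fix z assume z: "y - 1/2 \<le> z" "z \<le> y + 1/2"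
    have z0: "0 < z" using z that by auto
    show "(HH a has_real_derivative H1 a z) (at z)" using dHH[OF z0] .
    show "(H1 a has_real_derivative H2 a z) (at z)" using dH1[OF z0] .
    show "H2 a z \<le> - (P*(R*(lo-1)))" unfolding P_def R_def
      by (rule H2_bound) (use a that z in auto)
  qed simp
  have dC: "HH a (x+1) - 2*HH a x + HH a (x-1) \<le> -K" if x: "s \<le> x" "x \<le> s+1" for x
  proof -
    have "HH a (x+1) - 2*HH a x + HH a (x-1) = D (x+1/2) + 2 * D x + D (x-1/2)"
      unfolding D_def by (simp add: add.commute)
    moreover have "D (x+1/2) \<le> - (P*(R*(s-1))) * (1/2)^2"
      by (rule dbound) (use s x in auto)
    then have "D (x+1/2) \<le> - (P*R*s)/4 + (P*R)/4" by (simp add: field_simps power2_eq_square)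
    moreover have "D x \<le> - (P*(R*((s-1/2)-1))) * (1/2)^2"
      by (rule dbound) (use s x in auto)
    then have "D x \<le> - (P*R*s)/4 + 3*(P*R)/8" by (simp add: field_simps power2_eq_square)
    moreover have "D (x-1/2) \<le> - (P*(R*(1-1))) * (1/2)^2"
      by (rule dbound) (use s x in auto)
    then have "D (x-1/2) \<le> 0" by simp
    moreover have "K = 3*(P*R*s)/4 - P*R" unfolding K_def by (simp add: field_simps)
    ultimately show ?thesis by linarith
  qed
  have "(\<lambda>x. -K*x) s - CC a s \<le> (\<lambda>x. -K*x) (s+1) - CC a (s+1)"
  proof (rule deriv_cmp[of s "s+1" "CC a" "\<lambda>x. HH a (x+1) - 2*HH a x + HH a (x-1)" _ "\<lambda>_. -K"])
    fix x assume x: "s \<le> x" "x \<le> s+1"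
    show "(CC a has_real_derivative HH a (x+1) - 2*HH a x + HH a (x-1)) (at x)"
      by (rule dCC) (use x s a in auto)
    show "((\<lambda>x. -K*x) has_real_derivative -K) (at x)"
      using DERIV_cmult[OF DERIV_ident, of "-K"] by simp
    show "HH a (x+1) - 2*HH a x + HH a (x-1) \<le> -K" using dC x by auto
  qed simp
  then have k: "K \<le> CC a s - CC a (s+1)" by (simp add: algebra_simps)
  have eq: "(s+2) powr (-a-1) = (s+2) * R"
  proof -
    have h: "(-a-1) = 1 + (-a-2)" by simp
    show ?thesis unfolding R_def by (subst h, subst powr_add) (use s in simp)
  qed
  have lt: "P*R*(s+2)/12 < K"
  proof -
    have "(s+2)/12 < (s-1)/4 + (s-3/2)/2" using s by (simp add: divide_simps)
    from mult_strict_left_mono[OF this, of "P*R"] P0 R0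
    show ?thesis unfolding K_def by (simp add: algebra_simps)
  qed
  have "(1-a)*a*(s+2) powr (-a-1)/12 = P*R*(s+2)/12" unfolding eq P_def by (simp add: algebra_simps)
  with k lt show ?thesis by linarith
qed

lemma c_generic:
  assumes "1 \<le> s"
  shows "acoef a s + bcoef a s - bcoef a (s-1) = CC a (real s)"
  unfolding acoef_eq bcoef_eq bR_def CC_def using assms by (simp add: of_nat_diff field_simps)



lemma pw1:
  fixes x y a :: real
  assumes "0 < x" "x \<le> y" "0 \<le> a" "a \<le> 1"
  shows "x powr (-a-1) \<le> (y/x^2) * y powr (-a)"
proof -
  have y0: "0 < y" using assms by auto
  have e1: "x powr (-a-1) = x powr (-a) / x"
  proof -
    have h: "-a-1 = -a + -1" by simp
    show ?thesis by (subst h, subst powr_add) (use assms in \<open>simp add: powr_minus divide_inverse\<close>)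
  qed
  have e2: "x powr (-a) = (y/x) powr a * y powr (-a)"
    using assms y0 by (simp add: powr_divide powr_minus field_simps)
  have "(y/x) powr a \<le> (y/x) powr 1" by (rule powr_mono) (use assms in auto)
  also have "\<dots> = y/x" using assms by simp
  finally have "x powr (-a) \<le> (y/x) * y powr (-a)" unfolding e2
    by (rule mult_right_mono) simp
  then have "x powr (-a) / x \<le> (y/x) * y powr (-a) / x"
    by (rule divide_right_mono) (use assms in auto)
  then show ?thesis unfolding e1 by (simp add: power2_eq_square)
qed

lemma pw2:
  fixes x y a :: real
  assumes "0 < x" "x \<le> y" "y \<le> 4*x" "0 \<le> a" "a < 1"
  shows "x powr (-a-1) < 16 * y powr (-a-1)"
proof -
  have y0: "0 < y" using assms by auto
  have e: "x powr (-a-1) = (y/x) powr (a+1) * y powr (-a-1)"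
  proof -
    have h: "-a-1 = -(a+1)" by simp
    have p: "0 < y powr (a+1)" "0 < x powr (a+1)" using assms y0 by auto
    show ?thesis unfolding h powr_minus powr_divide using p by (simp add: field_simps)
  qed
  have "(y/x) powr (a+1) \<le> 4 powr (a+1)" by (rule powr_mono2) (use assms in \<open>auto simp: field_simps\<close>)
  also have "\<dots> < 4 powr 2" by (rule powr_less_mono) (use assms in auto)
  also have "\<dots> = 16" by simp
  finally have "(y/x) powr (a+1) < 16" .
  then show ?thesis unfolding e by (rule mult_strict_right_mono) (use y0 in simp)
qed



theorem lemma3:
  fixes \<alpha> :: real and j :: nat
  assumes "0 < \<alpha>" and "\<alpha> < 1" and "j \<ge> 2"
  shows "11 / 16 * ((1 - \<alpha>) / (real j + 1) powr \<alpha>) < ccoef \<alpha> j j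
       \<and> ccoef \<alpha> j j < (1 - \<alpha>) / (real j) powr \<alpha>
       \<and> ccoef \<alpha> j 0 > ccoef \<alpha> j 2
       \<and> (\<forall>s. 2 \<le> s \<and> s \<le> j - 1 \<longrightarrow> ccoef \<alpha> j s > ccoef \<alpha> j (s + 1))
       \<and> ccoef \<alpha> j 0 + 3 * ccoef \<alpha> j 1 - 4 * ccoef \<alpha> j 2 > 0"
proof -
  note a0 = assms(1) and a1 = assms(2) and jj = assms(3)
  define P where "P = (1-\<alpha>)*\<alpha>"
  have P0: "0 < P" using a0 a1 by (simp add: P_def)
  define J where "J = real j"
  have J2: "2 \<le> J" using jj by (simp add: J_def)
  have A0: "acoef \<alpha> 0 = 1" by (simp add: acoef_def)
  have B0: "bcoef \<alpha> 0 = 1/(2-\<alpha>) - 1/2" by (simp add: bcoef_def)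
  have Bnn: "0 \<le> bcoef \<alpha> l" if "1 \<le> l" for l
    unfolding bcoef_eq by (rule b_nonneg) (use that a0 a1 in auto)
  have Bup: "bcoef \<alpha> l \<le> P * (real l) powr (-\<alpha>-1) / 12" if "1 \<le> l" for l
    unfolding bcoef_eq P_def using b_bounds[of "real l" \<alpha>] that a0 a1 by auto
  have Blo: "P * (real l + 1) powr (-\<alpha>-1) / 12 \<le> bcoef \<alpha> l" if "1 \<le> l" for l
    unfolding bcoef_eq P_def using b_bounds[of "real l" \<alpha>] that a0 a1 by auto
  have Bup2: "bcoef \<alpha> l \<le> P / (12 * real l)" if "1 \<le> l" for l
    unfolding bcoef_eq P_def by (rule b_upper2) (use that a0 a1 in auto)
  have Alo: "g1 \<alpha> (real l + 1) < acoef \<alpha> l" if "1 \<le> l" for l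
    unfolding acoef_eq using a_bounds[of "real l" \<alpha>] that a0 a1 by auto
  have Aup: "acoef \<alpha> l < g1 \<alpha> (real l)" if "1 \<le> l" for l
    unfolding acoef_eq using a_bounds[of "real l" \<alpha>] that a0 a1 by auto

  have cj: "ccoef \<alpha> j j = acoef \<alpha> j - bcoef \<alpha> j - bcoef \<alpha> (j-1)"
    using jj by (auto simp: ccoef_def)
  have Bj1: "0 \<le> bcoef \<alpha> (j-1)" "0 \<le> bcoef \<alpha> j" using Bnn jj by auto
  have part2: "ccoef \<alpha> j j < (1 - \<alpha>) / (real j) powr \<alpha>"
  proof -
    have "acoef \<alpha> j < g1 \<alpha> (real j)" using Aup jj by auto
    also have "\<dots> = (1 - \<alpha>) / (real j) powr \<alpha>" unfolding g1_def by (simp add: powr_minus divide_inverse)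
    finally show ?thesis using cj Bj1 by linarith
  qed
  have part1: "11 / 16 * ((1 - \<alpha>) / (real j + 1) powr \<alpha>) < ccoef \<alpha> j j"
  proof -
    define T where "T = (J+1) powr (-\<alpha>)"
    have T0: "0 \<le> T" by (simp add: T_def)
    have Tq: "(1 - \<alpha>) / (real j + 1) powr \<alpha> = (1-\<alpha>) * T"
      unfolding T_def J_def by (simp add: powr_minus divide_inverse)
    have Aj: "(1-\<alpha>) * T < acoef \<alpha> j" using Alo[of j] jj unfolding g1_def T_def J_def by auto
    have "bcoef \<alpha> j \<le> P * J powr (-\<alpha>-1) / 12" using Bup[of j] jj by (simp add: J_def)
    also have "\<dots> \<le> P * ((J+1)/J^2 * T) / 12"
      using pw1[of J "J+1" \<alpha>] J2 a0 a1 P0 unfolding T_def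
      by (intro divide_right_mono mult_left_mono) auto
    finally have b1: "bcoef \<alpha> j \<le> P * ((J+1)/J^2 * T) / 12" .
    have rj: "real (j-1) = J - 1" using jj by (simp add: J_def of_nat_diff)
    have "bcoef \<alpha> (j-1) \<le> P * (J-1) powr (-\<alpha>-1) / 12" using Bup[of "j-1"] jj rj by simp
    also have "\<dots> \<le> P * ((J+1)/(J-1)^2 * T) / 12"
      using pw1[of "J-1" "J+1" \<alpha>] J2 a0 a1 P0 unfolding T_def
      by (intro divide_right_mono mult_left_mono) auto
    finally have b2: "bcoef \<alpha> (j-1) \<le> P * ((J+1)/(J-1)^2 * T) / 12" .
    have w1: "(J+1)/J^2 \<le> 3/4"
    proof -
      have "0 \<le> (3*J+2)*(J-2)" using J2 by simp
      then have "J+1 \<le> 3/4 * J^2" by (simp add: algebra_simps power2_eq_square)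
      then show ?thesis using J2 by (simp add: pos_divide_le_eq)
    qed
    have w2: "(J+1)/(J-1)^2 \<le> 3"
    proof -
      have "0 \<le> (3*J-1)*(J-2)" using J2 by simp
      then have "J+1 \<le> 3 * (J-1)^2" by (simp add: algebra_simps power2_eq_square)
      then show ?thesis using J2 by (simp add: pos_divide_le_eq)
    qed
    have "bcoef \<alpha> j + bcoef \<alpha> (j-1) \<le> P * (((J+1)/J^2 + (J+1)/(J-1)^2) * T) / 12"
      using b1 b2 by (simp add: algebra_simps add_divide_distrib)
    also have "\<dots> \<le> P * (15/4 * T) / 12"
    proof -
      have w: "(J+1)/J^2 + (J+1)/(J-1)^2 \<le> 15/4" using w1 w2 by linarith
      show ?thesis using w T0 P0 by (intro divide_right_mono mult_left_mono mult_right_mono) auto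
    qed
    also have "\<dots> \<le> (1-\<alpha>) * (15/4 * T) / 12"
      unfolding P_def using a0 a1 T0 by (intro divide_right_mono mult_right_mono) auto
    finally have "bcoef \<alpha> j + bcoef \<alpha> (j-1) \<le> 5/16 * ((1-\<alpha>) * T)" by (simp add: mult.commute)
    then show ?thesis unfolding Tq using cj Aj by linarith
  qed
  have c0: "ccoef \<alpha> j 0 = 1/2 + 1/(2-\<alpha>)" by (simp add: ccoef_def A0 B0)
  have B1: "0 \<le> bcoef \<alpha> 1" "0 \<le> bcoef \<alpha> 2" "0 \<le> bcoef \<alpha> 3" using Bnn by auto
  have B2u: "bcoef \<alpha> 2 \<le> P/24" using Bup2[of 2] by simp
  have B3u: "bcoef \<alpha> 3 \<le> P/36" using Bup2[of 3] by simp
  have A2u: "acoef \<alpha> 2 < g1 \<alpha> 2" using Aup[of 2] by simp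
  have A1l: "g1 \<alpha> 2 < acoef \<alpha> 1" using Alo[of 1] by simp
  have A1u: "acoef \<alpha> 1 < 1 - \<alpha>" using Aup[of 1] by (simp add: g1_def)
  have g12: "g1 \<alpha> 2 \<le> 1 - \<alpha>"
  proof -
    have "(2::real) powr (-\<alpha>) \<le> 2 powr 0" by (rule powr_mono) (use a0 in auto)
    then have "(2::real) powr (-\<alpha>) \<le> 1" by simp
    from mult_left_mono[OF this, of "1-\<alpha>"] a1 show ?thesis by (simp add: g1_def)
  qed
  have c2le: "ccoef \<alpha> j 2 \<le> acoef \<alpha> 2 + bcoef \<alpha> 2 + bcoef \<alpha> 3"
    using jj B1 by (cases "j = 2"; cases "j = 3"; auto simp: ccoef_def)
  have part3: "ccoef \<alpha> j 0 > ccoef \<alpha> j 2"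
  proof -
    have "1/2 < 1/(2-\<alpha>)" using a0 a1 by (simp add: divide_simps)
    moreover have "P/24 + P/36 \<le> \<alpha>" using P0 a0 a1 unfolding P_def by (simp add: algebra_simps)
    moreover have "P \<le> \<alpha>" using a0 a1 unfolding P_def by (simp add: mult_left_le_one_le)
    moreover have "(1 - \<alpha>) + P \<le> 1" using a0 a1 unfolding P_def by (simp add: algebra_simps)
    ultimately show ?thesis using c0 c2le A2u g12 B2u B3u P0 by linarith
  qed
  have part5: "ccoef \<alpha> j 0 + 3 * ccoef \<alpha> j 1 - 4 * ccoef \<alpha> j 2 > 0"
  proof -
    define X where "X = 1 - 2 * bcoef \<alpha> 0 + 3 * acoef \<alpha> 1 - 4 * acoef \<alpha> 2 + 7 * bcoef \<alpha> 1 - 4 * bcoef \<alpha> 2 - 4 * bcoef \<alpha> 3"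
    have ge: "X \<le> ccoef \<alpha> j 0 + 3 * ccoef \<alpha> j 1 - 4 * ccoef \<alpha> j 2"
    proof (cases "j = 2")
      case True then show ?thesis using B1 unfolding X_def by (simp add: ccoef_def A0)
    next
      case False
      show ?thesis
      proof (cases "j = 3")
        case True then show ?thesis using B1 unfolding X_def by (simp add: ccoef_def A0)
      next
        case False
        with \<open>j \<noteq> 2\<close> jj have "j \<ge> 4" by auto
        moreover have "2 \<le> j - 2" using \<open>j \<ge> 4\<close> by simp
        ultimately show ?thesis using B1 unfolding X_def by (simp add: ccoef_def A0)
      qed
    qed
    have e: "1 - 2 * bcoef \<alpha> 0 - (1-\<alpha>) = P/(2-\<alpha>)"
      unfolding B0 P_def using a1 by (simp add: field_simps)
    have "P/2 \<le> P/(2-\<alpha>)" by (rule divide_left_mono) (use P0 a0 a1 in auto)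
    then have "0 < X" unfolding X_def using e A2u A1l A1u B1 B2u B3u P0 by linarith
    with ge show ?thesis by linarith
  qed
  have part4: "\<forall>s. 2 \<le> s \<and> s \<le> j - 1 \<longrightarrow> ccoef \<alpha> j s > ccoef \<alpha> j (s + 1)"
  proof (intro allI impI)
    fix s assume s: "2 \<le> s \<and> s \<le> j - 1"
    show "ccoef \<alpha> j s > ccoef \<alpha> j (s + 1)"
    proof (cases "s = j - 1")
      case True
      then have j3: "j \<ge> 3" using s by auto
      have cj1: "ccoef \<alpha> j (j-1) = acoef \<alpha> (j-1) + bcoef \<alpha> (j-1) + bcoef \<alpha> j - bcoef \<alpha> (j-2)"
        using j3 by (auto simp: ccoef_def)
      have sj: "s + 1 = j" using True j3 by auto
      have r1: "real (j-1) = J - 1" and r2: "real (j-2) = J - 2"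
        using j3 by (simp_all add: J_def of_nat_diff)
      have sd: "ff \<alpha> (J+1) - 2 * ff \<alpha> J + ff \<alpha> (J-1) \<le> - (P*(J+1) powr (-\<alpha>-1))"
        using sdiff_ff[of J \<alpha>] J2 a0 a1 unfolding P_def by auto
      have ad: "acoef \<alpha> (j-1) - acoef \<alpha> j = - (ff \<alpha> (J+1) - 2 * ff \<alpha> J + ff \<alpha> (J-1))"
        unfolding acoef_eq r1 by (simp add: J_def)
      have bl1: "P * (J+1) powr (-\<alpha>-1) / 12 \<le> bcoef \<alpha> (j-1)"
      proof -
        have "P * (J+1) powr (-\<alpha>-1) / 12 \<le> P * J powr (-\<alpha>-1) / 12"
          using P0 J2 a0 by (intro divide_right_mono mult_left_mono powr_mono2') auto
        also have "\<dots> \<le> bcoef \<alpha> (j-1)" using Blo[of "j-1"] j3 r1 by simp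
        finally show ?thesis .
      qed
      have bl2: "P * (J+1) powr (-\<alpha>-1) / 12 \<le> bcoef \<alpha> j" using Blo[of j] jj by (simp add: J_def)
      have bu: "bcoef \<alpha> (j-2) \<le> P * (J-2) powr (-\<alpha>-1) / 12" using Bup[of "j-2"] j3 r2 by simp
      have j3r: "3 \<le> J" using j3 by (simp add: J_def)
      have "(J-2) powr (-\<alpha>-1) < 16 * (J+1) powr (-\<alpha>-1)"
        by (rule pw2) (use j3r a0 a1 in auto)
      from mult_strict_left_mono[OF this P0]
      have "P * (J-2) powr (-\<alpha>-1) / 12 < (4/3) * (P * (J+1) powr (-\<alpha>-1))" by simp
      then show ?thesis using sj cj cj1 sd ad bl1 bl2 bu True by simp
    next
      case False
      then have sj: "s \<le> j - 2" and j4: "j \<ge> 4" using s by auto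
      have cs: "ccoef \<alpha> j s = CC \<alpha> (real s)"
        using sj j4 s c_generic[of s \<alpha>] by (auto simp: ccoef_def)
      have dec: "CC \<alpha> (real s) - CC \<alpha> (real s + 1) > P * (real s + 2) powr (-\<alpha>-1) / 12"
        using Cdec[of "real s" \<alpha>] s a0 a1 unfolding P_def by auto
      show ?thesis
      proof (cases "s + 1 \<le> j - 2")
        case True
        have "ccoef \<alpha> j (s+1) = CC \<alpha> (real (s+1))"
          using True j4 c_generic[of "s+1" \<alpha>] by (auto simp: ccoef_def)
        then have e1: "ccoef \<alpha> j (s+1) = CC \<alpha> (real s + 1)" by (simp add: add.commute)
        have "0 \<le> P * (real s + 2) powr (-\<alpha>-1) / 12" using P0 by simp
        then show ?thesis using cs dec e1 by linarith
      next
        case False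
        then have sj1: "s + 1 = j - 1" using sj j4 by auto
        have hj: "j = s + 2" using sj1 j4 by auto
        have c1: "ccoef \<alpha> j (s+1) = acoef \<alpha> (s+1) + bcoef \<alpha> (s+1) + bcoef \<alpha> (s+2) - bcoef \<alpha> s"
          using hj s by (auto simp: ccoef_def)
        have "acoef \<alpha> (s+1) + bcoef \<alpha> (s+1) - bcoef \<alpha> (s+1-1) = CC \<alpha> (real (s+1))"
          by (rule c_generic) simp
        then have "acoef \<alpha> (s+1) + bcoef \<alpha> (s+1) - bcoef \<alpha> s = CC \<alpha> (real s + 1)"
          by (simp add: add.commute)
        with c1 have "ccoef \<alpha> j (s+1) = CC \<alpha> (real s + 1) + bcoef \<alpha> (s+2)" by linarith
        moreover have "bcoef \<alpha> (s+2) \<le> P * (real s + 2) powr (-\<alpha>-1) / 12"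
          using Bup[of "s+2"] by (simp add: add.commute)
        ultimately show ?thesis using cs dec by simp
      qed
    qed
  qed
  show ?thesis using part1 part2 part3 part4 part5 by blast
qed

end
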